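(* Let $S$ be a numerical semigroup with minimal generating set $P$, $D=S^*+S^*$, and $G=G(S)=(V,E)$. Then $|V\cap D|\ge\deg(u)$ for every $u\in V\cap D$. Moreover, if $V\cap D=\{u\}$, then $N_G(u)=\{x\}$ for some $x\in V\cap P$, and $u=2x$.
   Context: A numerical semigroup is a subset $S\subseteq\mathbb N$ containing $0$, closed under addition, with finite complement; $S^*=S\setminus\{0\}$, $m=\min S^*$, $P=S^*\setminus D$. $X=\{s\in S^*: s-m\notin S\}$. The graph $G(S)$ has edge set all subsets $\{x,y\}\subseteq X$ ($x=y$ allowed) with $x+y\in X$, and vertex set $V$ the endvertices of these edges. $N_G(x)=\{y\in X: x+y\in X\}$ and $\deg(x)=|N_G(x)|$. *)

theory Defs
  imports Main
begin

definition numerical_semigroup :: "nat set \<Rightarrow> bool" where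
  "numerical_semigroup S \<longleftrightarrow> 0 \<in> S \<and> (\<forall>x\<in>S. \<forall>y\<in>S. x + y \<in> S) \<and> finite (UNIV - S)"

definition ns_star :: "nat set \<Rightarrow> nat set" where
  "ns_star S = S - {0}"

definition ns_D :: "nat set \<Rightarrow> nat set" where
  "ns_D S = {a + b | a b. a \<in> ns_star S \<and> b \<in> ns_star S}"

definition ns_P :: "nat set \<Rightarrow> nat set" where
  "ns_P S = ns_star S - ns_D S"

definition ns_mult :: "nat set \<Rightarrow> nat" where
  "ns_mult S = (LEAST s. s \<in> ns_star S)"

definition ns_X :: "nat set \<Rightarrow> nat set" where
  "ns_X S = {s \<in> ns_star S. s - ns_mult S \<notin> S}"

definition ns_N :: "nat set \<Rightarrow> nat \<Rightarrow> nat set" where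
  "ns_N S x = {y \<in> ns_X S. x + y \<in> ns_X S}"

definition ns_deg :: "nat set \<Rightarrow> nat \<Rightarrow> nat" where
  "ns_deg S x = card (ns_N S x)"

text \<open>Vertex set V of G(S): endvertices of edges {x,y} \<subseteq> X (x = y allowed) with x + y in X.\<close>
definition ns_V :: "nat set \<Rightarrow> nat set" where
  "ns_V S = {x \<in> ns_X S. \<exists>y \<in> ns_X S. x + y \<in> ns_X S}"

end

theory Submission
  imports Defs
begin

lemma ns_basic:
  assumes "numerical_semigroup S"
  shows "ns_mult S \<in> ns_star S" "\<And>s. s \<in> ns_star S \<Longrightarrow> ns_mult S \<le> s"
proof -
  have fin: "finite (UNIV - S)" and z: "0 \<in> S" using assms unfolding numerical_semigroup_def by auto
  have "infinite S"
  proof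
    assume "finite S"
    then have "finite (S \<union> (UNIV - S))" using fin by blast
    then show False by simp
  qed
  then have "\<exists>s. s \<in> S \<and> s \<noteq> 0"
    by (metis finite.emptyI finite_insert insertI1 subsetI finite_subset singleton_iff)
  then obtain s where "s \<in> S" "s \<noteq> 0" by blast
  then have ex: "s \<in> ns_star S" unfolding ns_star_def by auto
  show "ns_mult S \<in> ns_star S" unfolding ns_mult_def using ex by (rule LeastI)
  show "\<And>s. s \<in> ns_star S \<Longrightarrow> ns_mult S \<le> s" unfolding ns_mult_def by (rule Least_le)
qed

lemma X_summand:
  assumes "numerical_semigroup S" "x \<in> ns_X S" "x = a + b" "a \<in> ns_star S" "b \<in> ns_star S"
  shows "a \<in> ns_X S"
proof (rule ccontr)
  assume "a \<notin> ns_X S"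
  then have h: "a - ns_mult S \<in> S" using assms(4) unfolding ns_X_def by auto
  have "ns_mult S \<le> a" using ns_basic(2)[OF assms(1) assms(4)] .
  then have "x - ns_mult S = (a - ns_mult S) + b" using assms(3) by simp
  moreover have "b \<in> S" using assms(5) unfolding ns_star_def by auto
  ultimately have "x - ns_mult S \<in> S" using h assms(1) unfolding numerical_semigroup_def by auto
  then show False using assms(2) unfolding ns_X_def by auto
qed

lemma X_finite:
  assumes "numerical_semigroup S"
  shows "finite (ns_X S)"
proof -
  have fin: "finite (UNIV - S)" using assms unfolding numerical_semigroup_def by auto
  have "ns_X S \<subseteq> (\<lambda>g. g + ns_mult S) ` (UNIV - S)"
  proof
    fix s assume s: "s \<in> ns_X S"
    then have "ns_mult S \<le> s" using ns_basic(2)[OF assms] unfolding ns_X_def by auto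
    then show "s \<in> (\<lambda>g. g + ns_mult S) ` (UNIV - S)" using s unfolding ns_X_def
      by (auto intro!: image_eqI[where x="s - ns_mult S"])
  qed
  then show ?thesis using fin finite_subset by blast
qed

lemma X_star: "x \<in> ns_X S \<Longrightarrow> x \<in> ns_star S" unfolding ns_X_def by auto

lemma key:
  assumes "numerical_semigroup S" "u \<in> ns_X S" "u = a + b" "a \<in> ns_star S" "b \<in> ns_star S"
    "y \<in> ns_N S u"
  shows "b + y \<in> ns_V S \<inter> ns_D S"
proof -
  have yX: "y \<in> ns_X S" and uy: "u + y \<in> ns_X S" using assms(6) unfolding ns_N_def by auto
  have aX: "a \<in> ns_X S" using X_summand[OF assms(1-5)] .
  have "b + y \<in> S" using assms(1,5) X_star[OF yX] unfolding numerical_semigroup_def ns_star_def by auto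
  then have by_: "b + y \<in> ns_X S"
    using X_summand[OF assms(1) uy, of "b + y" a] assms X_star[OF yX] unfolding ns_star_def by auto
  have "b + y \<in> ns_V S" unfolding ns_V_def using by_ aX uy assms(3)
    by (auto intro!: bexI[where x=a] simp: add.commute add.left_commute)
  moreover have "b + y \<in> ns_D S" unfolding ns_D_def using assms(5) X_star[OF yX] by auto
  ultimately show ?thesis by auto
qed

theorem proposition4p15:
  fixes S :: "nat set"
  assumes "numerical_semigroup S"
  shows "(\<forall>u \<in> ns_V S \<inter> ns_D S. card (ns_V S \<inter> ns_D S) \<ge> ns_deg S u)
       \<and> (\<forall>u. ns_V S \<inter> ns_D S = {u} \<longrightarrow>
             (\<exists>x \<in> ns_V S \<inter> ns_P S. ns_N S u = {x} \<and> u = 2 * x))"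
proof (intro conjI ballI allI impI)
  fix u assume u: "u \<in> ns_V S \<inter> ns_D S"
  then obtain a b where ab: "u = a + b" "a \<in> ns_star S" "b \<in> ns_star S" unfolding ns_D_def by auto
  have uX: "u \<in> ns_X S" using u unfolding ns_V_def by auto
  have fin: "finite (ns_V S \<inter> ns_D S)"
    using X_finite[OF assms] unfolding ns_V_def by auto
  have "inj_on (\<lambda>y. b + y) (ns_N S u)" by (auto simp: inj_on_def)
  moreover have "(\<lambda>y. b + y) ` ns_N S u \<subseteq> ns_V S \<inter> ns_D S"
    using key[OF assms uX ab] by auto
  ultimately show "ns_deg S u \<le> card (ns_V S \<inter> ns_D S)"
    unfolding ns_deg_def using card_inj_on_le fin by blast
next
  fix u assume VD: "ns_V S \<inter> ns_D S = {u}"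
  then have u: "u \<in> ns_V S \<inter> ns_D S" by auto
  then obtain a b where ab: "u = a + b" "a \<in> ns_star S" "b \<in> ns_star S" unfolding ns_D_def by auto
  have uX: "u \<in> ns_X S" using u unfolding ns_V_def by auto
  obtain y where yN: "y \<in> ns_N S u" using u unfolding ns_V_def ns_N_def by auto
  have all: "\<And>z. z \<in> ns_N S u \<Longrightarrow> z = a"
  proof -
    fix z assume "z \<in> ns_N S u"
    from key[OF assms uX ab this] VD ab(1) show "z = a" by auto
  qed
  have ba: "b = a"
  proof -
    have "a + y \<in> ns_V S \<inter> ns_D S" using key[OF assms uX _ ab(3) ab(2) yN] ab(1) by simp
    then show ?thesis using VD ab(1) all[OF yN] by auto
  qed
  have NU: "ns_N S u = {a}" using all yN by blast
  have aX: "a \<in> ns_X S" using X_summand[OF assms uX ab] .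
  have aV: "a \<in> ns_V S" unfolding ns_V_def using aX uX ab(1) ba by auto
  have aP: "a \<in> ns_P S"
  proof -
    have "a \<notin> ns_D S"
    proof
      assume "a \<in> ns_D S"
      then have "a = u" using aV VD by auto
      then show False using ab ba unfolding ns_star_def by auto
    qed
    then show ?thesis using ab(2) unfolding ns_P_def by auto
  qed
  show "\<exists>x \<in> ns_V S \<inter> ns_P S. ns_N S u = {x} \<and> u = 2 * x"
    using aV aP NU ab(1) ba by auto
qed

end
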